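(* For all integers $n\ge1$ and $k\ge0$, the generalized cosecant numbers satisfy $$c_{2n+2,k+1}=\frac{(2k+2-2n)(2k+1-2n)}{2n(2n+1)}\,c_{2n,k+1}+\frac{2n}{2n+1}\,c_{2n,k}.$$
   Context: The generalized cosecant numbers $c_{\rho,k}$ are defined as the coefficients of the power series $\left(\frac{x}{\sin x}\right)^{\rho}=\sum_{k\ge0}c_{\rho,k}\,x^{2k}$ (for $|x|<\pi$). *)

theory Defs
  imports "HOL-Analysis.Analysis"
begin

text \<open>Generalized cosecant numbers: c rho k is the coefficient of x^(2k) in the
  power series expansion of (x / sin x) powr rho, valid for 0 < |x| < pi
  (at x = 0 the function is 1 by continuity, which is the constant coefficient).\<close>

definition cosec_num :: "real \<Rightarrow> nat \<Rightarrow> real" where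
  "cosec_num \<rho> = (THE c. \<forall>x::real. 0 < \<bar>x\<bar> \<and> \<bar>x\<bar> < pi \<longrightarrow>
      (\<lambda>k. c k * x ^ (2 * k)) sums ((x / sin x) powr \<rho>))"

end

theory Submission
  imports Defs "HOL-Complex_Analysis.Complex_Analysis"
begin


lemma powser_zero_right:
  fixes d :: "nat \<Rightarrow> real"
  assumes R: "R > 0" and S: "\<And>x. 0 < x \<Longrightarrow> x < R \<Longrightarrow> (\<lambda>j. d j * x^j) sums 0"
  shows "d j = 0"
proof (induction j rule: less_induct)
  case (less j)
  define g where "g x = (\<Sum>n. d (n+j) * x^n)" for x :: real
  have sh: "(\<lambda>n. d (n+j) * x^n) sums 0" if "0 < x" "x < R" for x
  proof -
    have "(\<lambda>i. d (i+j) * x^(i+j)) sums 0"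
      using sums_zero_iff_shift[of j "\<lambda>i. d i * x^i" 0] less S[OF that] by simp
    then have "(\<lambda>i. (d (i+j) * x^i) * x^j) sums 0"
      by (simp add: power_add mult.assoc)
    then show ?thesis
      using that sums_mult_D[of "x^j" "\<lambda>i. d (i+j) * x^i" 0] by (simp add: mult.commute)
  qed
  have summ: "summable (\<lambda>n. d (n+j) * x^n)" if "norm x < R" for x
  proof -
    have "summable (\<lambda>n. d (n+j) * ((norm x + R)/2)^n)"
    proof -
      have p: "0 < (norm x + R)/2" "(norm x + R)/2 < R" using that R by auto
      show ?thesis using sh[OF p] sums_summable by blast
    qed
    then show ?thesis
      by (rule powser_inside) (use that in auto)
  qed
  have "DERIV g 0 :> (\<Sum>n. diffs (\<lambda>n. d (n+j)) n * 0^n)"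
    unfolding g_def by (rule termdiffs_strong'[where K=R]) (use summ R in auto)
  then have "isCont g 0" by (rule DERIV_isCont)
  then have "(g \<longlongrightarrow> g 0) (at_right 0)"
    by (simp add: isCont_def filterlim_at_split)
  moreover have "eventually (\<lambda>x. g x = 0) (at_right 0)"
    unfolding eventually_at_right_field using R
    by (intro exI[of _ R]) (auto simp: g_def intro!: sums_unique[symmetric] sh)
  then have "(g \<longlongrightarrow> 0) (at_right 0)"
    by (rule tendsto_eventually)
  ultimately have "g 0 = 0"
    using tendsto_unique[OF trivial_limit_at_right_real] by blast
  then show ?case by (simp add: g_def)
qed

lemma powser_unique_right:
  fixes a b :: "nat \<Rightarrow> real"
  assumes R: "R > 0"
    and A: "\<And>x. 0 < x \<Longrightarrow> x < R \<Longrightarrow> (\<lambda>j. a j * x^j) sums f x"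
    and B: "\<And>x. 0 < x \<Longrightarrow> x < R \<Longrightarrow> (\<lambda>j. b j * x^j) sums f x"
  shows "a = b"
proof
  fix j
  have "(\<lambda>j. a j - b j) j = 0"
  proof (rule powser_zero_right[OF R])
    fix x :: real assume "0 < x" "x < R"
    from sums_diff[OF A[OF this] B[OF this]] show "(\<lambda>j. (a j - b j) * x^j) sums 0"
      by (simp add: algebra_simps)
  qed
  then show "a j = b j" by simp
qed


lemma re_aux: "Re (c * complex_of_real y / fact n) = Re (c / fact n) * y"
proof -
  have "(fact n::complex) = of_real (fact n)" by simp
  then show ?thesis by (simp del: of_real_fact add: Re_divide_of_real[where z = "c * complex_of_real y"])
qed

lemma sin_nz_ball:
  fixes z :: complex
  assumes "norm z < pi" "z \<noteq> 0"
  shows "sin z \<noteq> 0"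
proof
  assume "sin z = 0"
  then obtain n :: int where n: "z = of_real (n * pi)" by (auto simp: sin_eq_0)
  then have "\<bar>real_of_int n * pi\<bar> < pi" using assms(1) by (metis norm_of_real)
  then have "\<bar>real_of_int n\<bar> * pi < pi" by (simp add: abs_mult)
  then have "\<bar>real_of_int n\<bar> < 1" using pi_gt_zero by simp
  then have "n = 0" by linarith
  then show False using n assms(2) by simp
qed

lemma exists_series:
  fixes m :: nat
  shows "\<exists>r. \<forall>x::real. 0 < \<bar>x\<bar> \<and> \<bar>x\<bar> < pi \<longrightarrow> (\<lambda>j. r j * x^j) sums ((x / sin x)^m)"
proof -
  define F where "F z = (if z = 0 then 1 else (z / sin z)^m)" for z :: complex
  have lim1: "((\<lambda>z::complex. sin z / z) \<longlongrightarrow> 1) (at 0)"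
  proof -
    have "((\<lambda>y::complex. (sin y - sin 0) / (y - 0)) \<longlongrightarrow> cos 0) (at 0)"
      using DERIV_sin[of 0] by (simp only: has_field_derivative_iff)
    then show ?thesis by simp
  qed
  have "((\<lambda>z::complex. inverse (sin z / z) ^ m) \<longlongrightarrow> inverse 1 ^ m) (at 0)"
    by (intro tendsto_intros lim1) simp
  then have "((\<lambda>z::complex. inverse (sin z / z) ^ m) \<longlongrightarrow> F 0) (at 0)"
    by (simp add: F_def)
  then have lim2: "(F \<longlongrightarrow> F 0) (at 0)"
    by (rule Lim_transform_eventually) (auto simp: F_def eventually_at_filter divide_inverse mult.commute)
  have hol0: "F holomorphic_on (ball 0 pi - {0})"
  proof -
    have "(\<lambda>z. (z / sin z)^m) holomorphic_on (ball 0 pi - {0})"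
      by (intro holomorphic_intros) (use sin_nz_ball in force)
    then show ?thesis by (rule holomorphic_transform) (auto simp: F_def)
  qed
  have hol: "F holomorphic_on ball 0 pi"
    by (rule no_isolated_singularity'[OF _ hol0]) (use tendsto_within_subset[OF lim2] in auto)
  define a where "a j = Re ((deriv ^^ j) F 0 / fact j)" for j
  show ?thesis
  proof (intro exI allI impI)
    fix x :: real assume x: "0 < \<bar>x\<bar> \<and> \<bar>x\<bar> < pi"
    have "(\<lambda>n. (deriv ^^ n) F 0 / fact n * (of_real x - 0)^n) sums F (of_real x)"
      by (rule holomorphic_power_series[OF hol]) (use x in auto)
    moreover have "\<And>n. Re ((deriv ^^ n) F 0 / (fact n) * (of_real x - 0)^n) = a n * x^n"
      unfolding a_def by (simp add: re_aux flip: of_real_power)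
    ultimately have "(\<lambda>j. a j * x^j) sums Re (F (of_real x))"
      using sums_Re by fastforce
    then show "(\<lambda>j. a j * x^j) sums ((x / sin x)^m)"
      using x by (simp add: F_def sin_of_real flip: of_real_power of_real_divide)
  qed
qed


lemma exists_even:
  fixes m :: nat
  shows "\<exists>r. (\<forall>x::real. 0 < \<bar>x\<bar> \<and> \<bar>x\<bar> < pi \<longrightarrow> (\<lambda>j. r j * x^j) sums ((x / sin x)^m))
            \<and> (\<forall>j. odd j \<longrightarrow> r j = 0)"
proof -
  from exists_series[of m] obtain r where r0: "\<forall>x::real. 0 < \<bar>x\<bar> \<and> \<bar>x\<bar> < pi \<longrightarrow> (\<lambda>j. r j * x^j) sums ((x / sin x)^m)"
    by (rule exE)
  note r = r0[rule_format]
  have eq: "(\<lambda>j. r j * (-1)^j) = r"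
  proof (rule powser_unique_right[OF pi_gt_zero])
    fix x :: real assume x: "0 < x" "x < pi"
    show "(\<lambda>j. r j * x^j) sums ((x / sin x)^m)" using r x by auto
    have a: "0 < \<bar>-x\<bar> \<and> \<bar>-x\<bar> < pi" using x by simp
    have b: "(-x) / sin (-x) = x / sin x" by simp
    have c: "(\<lambda>j. r j * (-x)^j) = (\<lambda>j. r j * (-1)^j * x^j)"
      by (rule ext) (metis power_minus mult.assoc)
    show "(\<lambda>j. r j * (-1)^j * x^j) sums ((x / sin x)^m)"
      using r[OF a] unfolding b c .
  qed
  have "r j = 0" if "odd j" for j
  proof -
    have "r j * (-1)^j = r j" using fun_cong[OF eq, of j] by simp
    then show ?thesis using that by simp
  qed
  then have "\<forall>j. odd j \<longrightarrow> r j = 0" by blast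
  with r0 show ?thesis by (intro exI[of _ r] conjI)
qed

definition Rc :: "nat \<Rightarrow> nat \<Rightarrow> real" where
  "Rc m = (SOME r. (\<forall>x::real. 0 < \<bar>x\<bar> \<and> \<bar>x\<bar> < pi \<longrightarrow> (\<lambda>j. r j * x^j) sums ((x / sin x)^m))
            \<and> (\<forall>j. odd j \<longrightarrow> r j = 0))"

lemma Rc:
  shows "\<And>x. 0 < \<bar>x\<bar> \<Longrightarrow> \<bar>x\<bar> < pi \<Longrightarrow> (\<lambda>j. Rc m j * x^j) sums ((x / sin x)^m)"
    and "\<And>j. odd j \<Longrightarrow> Rc m j = 0"
  using someI_ex[OF exists_even[of m]] unfolding Rc_def[symmetric] by blast+

lemma xsin_pos:
  fixes x :: real
  assumes "0 < \<bar>x\<bar>" "\<bar>x\<bar> < pi"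
  shows "x / sin x > 0"
proof (cases "x > 0")
  case True
  then have "sin x > 0" using assms by (intro sin_gt_zero) auto
  then show ?thesis using True by simp
next
  case False
  then have "sin (-x) > 0" using assms by (intro sin_gt_zero) auto
  then show ?thesis using False assms by (simp add: divide_neg_neg)
qed

lemma reindex_even:
  assumes "\<And>j. odd j \<Longrightarrow> r j = 0"
  shows "(\<lambda>k. r (2*k) * (x::real)^(2*k)) sums s \<longleftrightarrow> (\<lambda>j. r j * x^j) sums s"
proof -
  have sm: "strict_mono (\<lambda>n::nat. 2*n)" by (auto simp: strict_mono_def)
  have z: "r n * x^n = 0" if "n \<notin> range (\<lambda>n::nat. 2*n)" for n
  proof -
    have "odd n"
    proof
      assume "even n"
      then have "n = 2 * (n div 2)" by simp
      then have "n \<in> range (\<lambda>n::nat. 2*n)" by (rule image_eqI) simp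
      then show False using that by blast
    qed
    then show ?thesis using assms by simp
  qed
  show ?thesis
    using sums_mono_reindex[OF sm, of "\<lambda>j. r j * x^j" s, OF z] by simp
qed

lemma cosec_Rc: "cosec_num (real m) k = Rc m (2*k)"
proof -
  have P: "\<forall>x::real. 0 < \<bar>x\<bar> \<and> \<bar>x\<bar> < pi \<longrightarrow>
      (\<lambda>k. Rc m (2*k) * x ^ (2 * k)) sums ((x / sin x) powr (real m))"
  proof (intro allI impI)
    fix x :: real assume x: "0 < \<bar>x\<bar> \<and> \<bar>x\<bar> < pi"
    then have "(x / sin x) powr (real m) = (x / sin x)^m"
      using xsin_pos by (simp add: powr_realpow)
    moreover have "(\<lambda>j. Rc m j * x^j) sums ((x / sin x)^m)" using Rc(1) x by auto
    moreover have "\<And>j. odd j \<Longrightarrow> Rc m j = 0" by (rule Rc(2))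
    ultimately show "(\<lambda>k. Rc m (2*k) * x ^ (2 * k)) sums ((x / sin x) powr (real m))"
      using reindex_even[of "Rc m"] by metis
  qed
  have U: "c = (\<lambda>k. Rc m (2*k))" if c: "\<forall>x::real. 0 < \<bar>x\<bar> \<and> \<bar>x\<bar> < pi \<longrightarrow>
      (\<lambda>k. c k * x ^ (2 * k)) sums ((x / sin x) powr (real m))" for c
  proof -
    define r' where "r' j = (if even j then c (j div 2) else 0)" for j
    have "r' = Rc m"
    proof (rule powser_unique_right[OF pi_gt_zero])
      fix x :: real assume x: "0 < x" "x < pi"
      show "(\<lambda>j. Rc m j * x^j) sums ((x / sin x)^m)" using Rc(1) x by auto
      have e: "(x / sin x) powr (real m) = (x / sin x)^m"
        using xsin_pos x by (simp add: powr_realpow)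
      have "(\<lambda>k. c k * x ^ (2 * k)) sums ((x / sin x) powr (real m))"
        using c x by simp
      then have "(\<lambda>k. r' (2*k) * x ^ (2 * k)) sums ((x / sin x)^m)"
        using e by (simp add: r'_def)
      moreover have "\<And>j. odd j \<Longrightarrow> r' j = 0" by (simp add: r'_def)
      ultimately show "(\<lambda>j. r' j * x^j) sums ((x / sin x)^m)"
        using reindex_even[of r'] by blast
    qed
    show ?thesis
    proof
      fix k
      have "r' (2*k) = Rc m (2*k)" using \<open>r' = Rc m\<close> by simp
      then show "c k = Rc m (2*k)" by (simp add: r'_def)
    qed
  qed
  have "cosec_num (real m) = (\<lambda>k. Rc m (2*k))"
    unfolding cosec_num_def
    by (rule the_equality[where P="\<lambda>c. \<forall>x::real. 0 < \<bar>x\<bar> \<and> \<bar>x\<bar> < pi \<longrightarrow>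
      (\<lambda>k. c k * x ^ (2 * k)) sums ((x / sin x) powr (real m))", OF P]) (rule U)
  then show ?thesis by simp
qed



lemma dq:
  fixes x :: real and m :: nat
  assumes "sin x \<noteq> 0"
  shows "((\<lambda>x. inverse (sin x) ^ m) has_real_derivative (- real m * cos x * inverse (sin x) ^ (m+1))) (at x)"
proof -
  have d1: "((\<lambda>x. inverse (sin x)) has_real_derivative (- cos x * inverse (sin x)^2)) (at x)"
    using assms by (auto intro!: derivative_eq_intros simp: power2_eq_square)
  have e: "real m * (- cos x * inverse (sin x)^2 * inverse (sin x) ^ (m - Suc 0)) = - real m * cos x * inverse (sin x) ^ (m+1)"
  proof (cases m)
    case (Suc p)
    then show ?thesis by (simp add: power2_eq_square algebra_simps)
  qed simp
  show ?thesis using DERIV_power[OF d1, of m] unfolding e .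
qed

lemma dq1:
  fixes x :: real and m :: nat
  assumes s: "sin x \<noteq> 0"
  shows "((\<lambda>x. - real m * cos x * inverse (sin x) ^ (m+1)) has_real_derivative
      (real m * (real m + 1) * inverse (sin x) ^ (m+2) - (real m)^2 * inverse (sin x) ^ m)) (at x)"
proof -
  define u where "u = inverse (sin x)"
  have d: "((\<lambda>x. (- real m * cos x) * inverse (sin x) ^ (m+1)) has_real_derivative
      ((- real m * - sin x) * u^(m+1) + (- real m * cos x) * (- real (m+1) * cos x * u ^ (m+1+1)))) (at x)"
    unfolding u_def
    by (rule DERIV_cong[OF DERIV_mult[OF DERIV_cmult[OF DERIV_cos] dq[of x "m+1", OF s]]]) (simp add: algebra_simps)
  have su: "sin x * u = 1" using s by (simp add: u_def)
  have c2: "cos x ^ 2 = 1 - sin x ^ 2" by (simp add: cos_squared_eq)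
  have a1: "sin x * u^(m+1) = u^m"
  proof -
    have "sin x * u^(m+1) = (sin x * u) * u^m" by (simp add: algebra_simps)
    then show ?thesis using su by simp
  qed
  have a2: "cos x * cos x * u^(m+2) = u^(m+2) - u^m"
  proof -
    have "cos x * cos x * u^(m+2) = (1 - sin x ^ 2) * u^(m+2)" using c2 by (simp add: power2_eq_square)
    also have "\<dots> = u^(m+2) - (sin x * u)^2 * u^m" by (simp add: algebra_simps power2_eq_square)
    finally show ?thesis using su by simp
  qed
  have "(- real m * - sin x) * u^(m+1) + (- real m * cos x) * (- real (m+1) * cos x * u ^ (m+1+1))
      = real m * (sin x * u^(m+1)) + real m * real (m+1) * (cos x * cos x * u^(m+2))"
    by (simp add: algebra_simps)
  also have "\<dots> = real m * (real m + 1) * u ^ (m+2) - (real m)^2 * u ^ m"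
    unfolding a1 a2 by (simp add: algebra_simps power2_eq_square)
  finally show ?thesis using d unfolding u_def by simp
qed


lemma closed_ode:
  fixes x :: real and p :: nat
  defines "M \<equiv> real (p+2)"
  shows "x^2 * (M*(M-1)*x^p*b + 2*M*x^(p+1)*(-M*c*b*y) + x^(p+2)*(M*(M+1)*b*y^2 - M^2*b))
     - 2*M*x*(M*x^(p+1)*b + x^(p+2)*(-M*c*b*y)) + (M*(M+1) + M^2*x^2)*(x^(p+2)*b)
     = M*(M+1)*(x^(p+4)*(b*y^2))"
  unfolding M_def by (simp add: power_add eval_nat_numeral algebra_simps)

lemma Rc_rec:
  fixes p j :: nat
  assumes j2: "j \<ge> 2"
  defines "m \<equiv> p + 2"
  shows "real m * (real m + 1) * Rc (m+2) j
     = (real j - real m) * (real j - real m - 1) * Rc m j + (real m)^2 * Rc m (j-2)"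
proof -
  define M where "M = real m"
  define r where "r = Rc m"
  define G where "G x = (\<Sum>n. r n * x^n)" for x :: real
  define G1 where "G1 x = (\<Sum>n. diffs r n * x^n)" for x :: real
  define G2 where "G2 x = (\<Sum>n. diffs (diffs r) n * x^n)" for x :: real
  define q where "q x = inverse (sin x) ^ m" for x :: real
  define q1 where "q1 x = - M * cos x * (q x * inverse (sin x))" for x :: real
  define q2 where "q2 x = M * (M + 1) * (q x * inverse (sin x)^2) - M^2 * q x" for x :: real
  define h where "h x = x^(p+2) * q x" for x :: real
  define h1 where "h1 x = M * x^(p+1) * q x + x^(p+2) * q1 x" for x :: real
  define h2 where "h2 x = M * (M - 1) * x^p * q x + 2 * M * x^(p+1) * q1 x + x^(p+2) * q2 x" for x :: real
  define I where "I = {0<..<pi}"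
  have oI: "open I" by (simp add: I_def)
  have sinI: "sin x \<noteq> 0" if "x \<in> I" for x
    using that sin_gt_zero[of x] by (auto simp: I_def)
  have summ: "summable (\<lambda>n. r n * x^n)" if "norm x < pi" for x
  proof (cases "x = 0")
    case True then show ?thesis by simp
  next
    case False then show ?thesis using Rc(1)[of x m] that sums_summable by (auto simp: r_def)
  qed
  have summ1: "summable (\<lambda>n. diffs r n * x^n)" if "norm x < pi" for x
    by (rule termdiff_converges[OF that summ])
  have dG: "(G has_real_derivative G1 x) (at x)" if "norm x < pi" for x
    unfolding G_def G1_def by (rule termdiffs_strong'[OF summ that])
  have dG1: "(G1 has_real_derivative G2 x) (at x)" if "norm x < pi" for x
    unfolding G1_def G2_def by (rule termdiffs_strong'[OF summ1 that])
  have GI: "G x = h x" "(\<lambda>j. r j * x^j) sums G x" if "x \<in> I" for x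
  proof -
    have "(\<lambda>j. r j * x^j) sums ((x / sin x)^m)" using Rc(1)[of x m] that by (auto simp: r_def I_def)
    moreover have "(x / sin x)^m = h x" by (simp add: h_def q_def divide_inverse power_mult_distrib m_def)
    ultimately show "G x = h x" "(\<lambda>j. r j * x^j) sums G x" by (auto simp: G_def sums_iff)
  qed
  have dqI: "(q has_real_derivative q1 x) (at x)" if "x \<in> I" for x
    unfolding q_def q1_def M_def
    by (rule DERIV_cong[OF dq[OF sinI[OF that]]]) (simp add: algebra_simps)
  have dq1I: "(q1 has_real_derivative q2 x) (at x)" if "x \<in> I" for x
  proof -
    have e: "q1 = (\<lambda>x. - real m * cos x * inverse (sin x) ^ (m+1))"
      by (rule ext) (simp add: q1_def q_def M_def algebra_simps)
    show ?thesis unfolding e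
      by (rule DERIV_cong[OF dq1[OF sinI[OF that]]]) (simp add: q2_def q_def M_def algebra_simps power2_eq_square)
  qed
  have dh: "(h has_real_derivative h1 x) (at x)" if "x \<in> I" for x
    unfolding h_def h1_def
    by (rule DERIV_cong[OF DERIV_mult[OF DERIV_pow dqI[OF that]]]) (simp add: algebra_simps M_def m_def)
  have dh1: "(h1 has_real_derivative h2 x) (at x)" if "x \<in> I" for x
    unfolding h1_def h2_def
    by (rule DERIV_cong[OF DERIV_add[OF DERIV_mult[OF DERIV_cmult[OF DERIV_pow] dqI[OF that]]
          DERIV_mult[OF DERIV_pow dq1I[OF that]]]]) (simp add: algebra_simps M_def m_def)
  have normI: "norm x < pi" if "x \<in> I" for x using that by (auto simp: I_def)
  have G1I: "G1 x = h1 x" if "x \<in> I" for x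
  proof -
    have "(h has_real_derivative G1 x) (at x)"
      by (rule has_field_derivative_transform_within_open[OF dG[OF normI[OF that]] oI that]) (simp add: GI)
    then show ?thesis using dh[OF that] by (rule DERIV_unique)
  qed
  have G2I: "G2 x = h2 x" if "x \<in> I" for x
  proof -
    have "(h1 has_real_derivative G2 x) (at x)"
      by (rule has_field_derivative_transform_within_open[OF dG1[OF normI[OF that]] oI that]) (simp add: G1I)
    then show ?thesis using dh1[OF that] by (rule DERIV_unique)
  qed
  define e where "e j = (real j * (real j - 1) - 2 * M * real j + M * (M + 1)) * r j
      + M^2 * (if 2 \<le> j then r (j - 2) else 0)" for j
  have ser: "(\<lambda>j. e j * x^j) sums (M * (M + 1) * (x / sin x)^(m+2))" if xI: "x \<in> I" for x
  proof -
    have nx: "norm x < pi" using normI[OF xI] .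
    have S0: "(\<lambda>j. r j * x^j) sums G x" using GI(2)[OF xI] .
    have S1: "(\<lambda>j. real j * r j * x^j) sums (x * G1 x)"
    proof -
      have "(\<lambda>n. x * (diffs r n * x^n)) sums (x * G1 x)"
        using sums_mult[OF summable_sums[OF summ1[OF nx]], of x] by (simp add: G1_def)
      then have "(\<lambda>n. (\<lambda>j. real j * r j * x^j) (Suc n)) sums (x * G1 x)"
        by (simp add: diffs_def algebra_simps)
      then show ?thesis using sums_Suc_iff[of "\<lambda>j. real j * r j * x^j" "x * G1 x"] by simp
    qed
    have S2: "(\<lambda>j. real j * (real j - 1) * r j * x^j) sums (x^2 * G2 x)"
    proof -
      have "(\<lambda>n. x^2 * (diffs (diffs r) n * x^n)) sums (x^2 * G2 x)"
        using sums_mult[OF summable_sums[OF termdiff_converges[OF nx summ1]], of "x^2"] by (simp add: G2_def)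
      then have "(\<lambda>n. (\<lambda>j. real j * (real j - 1) * r j * x^j) (n + 2)) sums (x^2 * G2 x)"
        by (simp add: diffs_def algebra_simps power2_eq_square)
      then show ?thesis
        by (subst (asm) sums_zero_iff_shift) (auto simp: less_2_cases_iff)
    qed
    have S3: "(\<lambda>j. (if 2 \<le> j then r (j - 2) else 0) * x^j) sums (x^2 * G x)"
    proof -
      have "(\<lambda>n. x^2 * (r n * x^n)) sums (x^2 * G x)"
        using sums_mult[OF S0, of "x^2"] .
      then have "(\<lambda>n. (\<lambda>j. (if 2 \<le> j then r (j - 2) else 0) * x^j) (n + 2)) sums (x^2 * G x)"
        by (simp add: algebra_simps power2_eq_square)
      then show ?thesis
        by (subst (asm) sums_zero_iff_shift) (auto simp: less_2_cases_iff)
    qed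
    have S: "(\<lambda>j. real j * (real j - 1) * r j * x^j - 2 * M * (real j * r j * x^j)
        + M * (M + 1) * (r j * x^j) + M^2 * ((if 2 \<le> j then r (j - 2) else 0) * x^j))
        sums (x^2 * G2 x - 2 * M * (x * G1 x) + M * (M + 1) * G x + M^2 * (x^2 * G x))"
      by (intro sums_add sums_diff sums_mult S0 S1 S2 S3)
    have fe: "(\<lambda>j. e j * x^j) = (\<lambda>j. real j * (real j - 1) * r j * x^j - 2 * M * (real j * r j * x^j)
        + M * (M + 1) * (r j * x^j) + M^2 * ((if 2 \<le> j then r (j - 2) else 0) * x^j))"
      by (rule ext) (simp add: e_def algebra_simps)
    have val: "x^2 * G2 x - 2 * M * (x * G1 x) + M * (M + 1) * G x + M^2 * (x^2 * G x)
        = M * (M + 1) * (x / sin x)^(m+2)"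
    proof -
      define y where "y = inverse (sin x)"
      define b where "b = y^m"
      have qb: "q x = b" by (simp add: q_def b_def y_def)
      have "x^2 * G2 x - 2 * M * (x * G1 x) + M * (M + 1) * G x + M^2 * (x^2 * G x)
          = x^2 * (M*(M-1)*x^p*b + 2*M*x^(p+1)*(-M*cos x*b*y) + x^(p+2)*(M*(M+1)*b*y^2 - M^2*b))
     - 2*M*x*(M*x^(p+1)*b + x^(p+2)*(-M*cos x*b*y)) + (M*(M+1) + M^2*x^2)*(x^(p+2)*b)"
        unfolding GI(1)[OF xI] G1I[OF xI] G2I[OF xI] h_def h1_def h2_def q1_def q2_def qb y_def[symmetric]
        by algebra
      also have "\<dots> = M*(M+1)*(x^(p+4)*(b*y^2))"
        unfolding M_def m_def by (rule closed_ode)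
      also have "\<dots> = M * (M + 1) * (x / sin x)^(m+2)"
        by (simp add: b_def y_def m_def divide_inverse power_mult_distrib power_add eval_nat_numeral)
      finally show ?thesis .
    qed
    show ?thesis using S unfolding fe val .
  qed
  have T: "(\<lambda>j. (M * (M + 1) * Rc (m+2) j) * x^j) sums (M * (M + 1) * (x / sin x)^(m+2))"
    if xI: "x \<in> I" for x
  proof -
    have "(\<lambda>j. Rc (m+2) j * x^j) sums ((x / sin x)^(m+2))"
      using Rc(1)[of x "m+2"] xI by (auto simp: I_def)
    from sums_mult[OF this, of "M * (M + 1)"] show ?thesis by (simp add: mult.assoc)
  qed
  have "e = (\<lambda>j. M * (M + 1) * Rc (m+2) j)"
    by (rule powser_unique_right[OF pi_gt_zero, of _ "\<lambda>x. M * (M + 1) * (x / sin x)^(m+2)"])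
       (use ser T in \<open>auto simp: I_def\<close>)
  from fun_cong[OF this, of j] j2 show ?thesis
    by (simp add: e_def M_def r_def algebra_simps)
qed

lemma aux_div:
  fixes M X a b A :: real
  assumes "M > 0" "M * (M + 1) * X = A * a + M^2 * b"
  shows "X = A / (M * (M + 1)) * a + M / (M + 1) * b"
proof -
  have D: "M * (M + 1) \<noteq> 0" using assms(1) by simp
  have "X = (A * a + M^2 * b) / (M * (M + 1))"
    using assms(2) D by (simp add: eq_divide_eq mult.commute)
  also have "\<dots> = A / (M * (M + 1)) * a + M^2 / (M * (M + 1)) * b"
    by (simp add: add_divide_distrib)
  also have "M^2 / (M * (M + 1)) = M / (M + 1)"
    using assms(1) by (simp add: power2_eq_square)
  finally show ?thesis .
qed

theorem mainTheorem7:
  fixes n k :: nat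
  assumes "n \<ge> 1"
  shows "cosec_num (2 * real n + 2) (k + 1) =
    ((2 * real k + 2 - 2 * real n) * (2 * real k + 1 - 2 * real n)) / (2 * real n * (2 * real n + 1))
      * cosec_num (2 * real n) (k + 1)
    + (2 * real n) / (2 * real n + 1) * cosec_num (2 * real n) k"
proof -
  define p where "p = 2 * n - 2"
  have np: "2 * n = p + 2" using assms by (simp add: p_def)
  have e1: "real (p + 2) + 2 = real (p + 2 + 2)" by simp
  have e2: "2 * real n = real (p + 2)" using np by (metis of_nat_mult of_nat_numeral)
  have R: "real (p+2) * (real (p+2) + 1) * Rc (p+2+2) (2*(k+1))
     = ((2 * real k + 2 - real (p+2)) * (2 * real k + 1 - real (p+2))) * Rc (p+2) (2*(k+1))
       + (real (p+2))^2 * Rc (p+2) (2*k)"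
    using Rc_rec[of "2*(k+1)" p] by (simp add: algebra_simps)
  have "Rc (p+2+2) (2*(k+1)) = ((2 * real k + 2 - real (p+2)) * (2 * real k + 1 - real (p+2)))
       / (real (p+2) * (real (p+2) + 1)) * Rc (p+2) (2*(k+1))
       + real (p+2) / (real (p+2) + 1) * Rc (p+2) (2*k)"
    by (rule aux_div[OF _ R]) simp
  then show ?thesis
    unfolding e2 e1 cosec_Rc .
qed


end
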